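(* Let $r>1$ and integers $N\ge1$, $K\ge2$, and let $\mathcal{A}=\{\emptyset,\{1\},\dots,\{N\}\}$ (single item auction). Then the worst case efficiency loss ratio with possibly different priors satisfies $$\eta(r,K;\mathcal{A})\ge\frac{\gamma^*(r,K,1)-\left(1-\frac1r\right)}{1+\gamma^*(r,K,1)},\qquad\text{where } \gamma^*(r,K,1)=(K-1)\left(1-r^{-\frac1{K-1}}\right).$$
   Context: Buyer $n\in\{1,\dots,N\}$ has type $X_n$, a discrete random variable taking values $0<x_n^1<\dots<x_n^{K_n}$ with probabilities $p_n^i>0$; $X_1,\dots,X_N$ independent. An allocation rule $\pi$ maps each bid vector $v$ ($v_n\in\{x_n^1,\dots,x_n^{K_n}\}$) to a probability distribution on $\mathcal{A}$; $Q_n(v)=\sum_{A\ni n}\pi_A(v)$. Virtual valuation: $w_n(x_n^i)=x_n^i-(x_n^{i+1}-x_n^i)\frac{\sum_{j>i}p_n^j}{p_n^i}$ for $i<K_n$, $w_n(x_n^{K_n})=x_n^{K_n}$. Monotone virtual valuation: with $(g_n^0,h_n^0)=(0,-x_n^1)$, $(g_n^i,h_n^i)=(\sum_{j\le i}p_n^j,-x_n^{i+1}\sum_{j>i}p_n^j)$ for $1\le i\le K_n-1$, $(g_n^{K_n},h_n^{K_n})=(1,0)$, let $\overline{h}_n^i$ be the value at $g_n^i$ of the lower convex hull of these points and $\overline{w}_n(x_n^i)=(\overline{h}_n^i-\overline{h}_n^{i-1})/(g_n^i-g_n^{i-1})$. An allocation rule is optimal (allocation rule of a revenue-maximizing Bayesian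 incentive compatible, individually rational mechanism) if for every $v$, $\pi(v)$ is supported on $\arg\max_{A\in\mathcal{A}}\sum_{n\in A}\overline{w}_n(v_n)$, with consistent tie-breaking: if $v_n<v_n'$ and $\overline{w}_n(v_n)=\overline{w}_n(v_n')$ then $Q_n(v_n,v_{-n})\le Q_n(v_n',v_{-n})$. $\tilde\pi^o$ is an optimal allocation rule maximizing realized welfare $\mathbb{E}[\sum_nQ_n(X)X_n]$ among optimal rules. $\mathrm{MSW}=\mathbb{E}[\max_nX_n]$, $\mathrm{ELR}(\pi)=(\mathrm{MSW}-\mathbb{E}[\sum_nQ_n(X)X_n])/\mathrm{MSW}$. $\mathcal{D}_{r,K}$: all such type distributions with $K_n\le K$, $x_n^1>0$, $p_n^i>0$, $(\max_nx_n^{K_n})/(\min_nx_n^1)\le r$; $\eta(r,K;\mathcal{A})=\sup_{\mathcal{D}_{r,K}}\mathrm{ELR}(\tilde\pi^o)$. *)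

theory Defs
  imports "HOL-Analysis.Analysis"
begin

text \<open>A type distribution is given by Kn (number of types of buyer n),
  x n i (the i-th type value, i = 1..Kn n) and p n i (its probability).
  Bids are represented by type indices: a bid profile v maps buyer n to an index in 1..Kn n.\<close>

definition valid_dist ::
  "nat \<Rightarrow> real \<Rightarrow> nat \<Rightarrow> (nat \<Rightarrow> nat) \<Rightarrow> (nat \<Rightarrow> nat \<Rightarrow> real) \<Rightarrow> (nat \<Rightarrow> nat \<Rightarrow> real) \<Rightarrow> bool" where
  "valid_dist N r K Kn x p \<longleftrightarrow>
     (\<forall>n\<in>{1..N}. 1 \<le> Kn n \<and> Kn n \<le> K \<and> 0 < x n 1 \<and>
        (\<forall>i\<in>{1..<Kn n}. x n i < x n (Suc i)) \<and>
        (\<forall>i\<in>{1..Kn n}. 0 < p n i) \<and> (\<Sum>i=1..Kn n. p n i) = 1) \<and>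
     (MAX n\<in>{1..N}. x n (Kn n)) / (MIN n\<in>{1..N}. x n 1) \<le> r"

definition profiles :: "nat \<Rightarrow> (nat \<Rightarrow> nat) \<Rightarrow> (nat \<Rightarrow> nat) set" where
  "profiles N Kn = PiE {1..N} (\<lambda>n. {1..Kn n})"

definition prof_prob :: "nat \<Rightarrow> (nat \<Rightarrow> nat \<Rightarrow> real) \<Rightarrow> (nat \<Rightarrow> nat) \<Rightarrow> real" where
  "prof_prob N p v = (\<Prod>n\<in>{1..N}. p n (v n))"

text \<open>Points (g^i, h^i), i = 0..Kn n, whose lower convex hull defines the monotone virtual valuation.\<close>

definition gpt :: "(nat \<Rightarrow> nat) \<Rightarrow> (nat \<Rightarrow> nat \<Rightarrow> real) \<Rightarrow> nat \<Rightarrow> nat \<Rightarrow> real" where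
  "gpt Kn p n i = (if i = Kn n then 1 else (\<Sum>j=1..i. p n j))"

definition hpt :: "(nat \<Rightarrow> nat) \<Rightarrow> (nat \<Rightarrow> nat \<Rightarrow> real) \<Rightarrow> (nat \<Rightarrow> nat \<Rightarrow> real) \<Rightarrow> nat \<Rightarrow> nat \<Rightarrow> real" where
  "hpt Kn x p n i =
     (if i = 0 then - x n 1
      else if i < Kn n then - x n (Suc i) * (\<Sum>j\<in>{i<..Kn n}. p n j)
      else 0)"

definition hbar :: "(nat \<Rightarrow> nat) \<Rightarrow> (nat \<Rightarrow> nat \<Rightarrow> real) \<Rightarrow> (nat \<Rightarrow> nat \<Rightarrow> real) \<Rightarrow> nat \<Rightarrow> nat \<Rightarrow> real" where
  "hbar Kn x p n i =
     Sup {f (gpt Kn p n i) | f. convex_on {0..1} f \<and>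
                                 (\<forall>j\<in>{0..Kn n}. f (gpt Kn p n j) \<le> hpt Kn x p n j)}"

definition wbar :: "(nat \<Rightarrow> nat) \<Rightarrow> (nat \<Rightarrow> nat \<Rightarrow> real) \<Rightarrow> (nat \<Rightarrow> nat \<Rightarrow> real) \<Rightarrow> nat \<Rightarrow> nat \<Rightarrow> real" where
  "wbar Kn x p n i =
     (hbar Kn x p n i - hbar Kn x p n (i - 1)) / (gpt Kn p n i - gpt Kn p n (i - 1))"

definition alloc_rule ::
  "nat \<Rightarrow> (nat \<Rightarrow> nat) \<Rightarrow> nat set set \<Rightarrow> ((nat \<Rightarrow> nat) \<Rightarrow> nat set \<Rightarrow> real) \<Rightarrow> bool" where
  "alloc_rule N Kn \<A> \<pi> \<longleftrightarrow>
     (\<forall>v\<in>profiles N Kn. (\<forall>A. 0 \<le> \<pi> v A) \<and> (\<forall>A. A \<notin> \<A> \<longrightarrow> \<pi> v A = 0) \<and>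
                         (\<Sum>A\<in>\<A>. \<pi> v A) = 1)"

definition Qn :: "nat set set \<Rightarrow> ((nat \<Rightarrow> nat) \<Rightarrow> nat set \<Rightarrow> real) \<Rightarrow> nat \<Rightarrow> (nat \<Rightarrow> nat) \<Rightarrow> real" where
  "Qn \<A> \<pi> n v = (\<Sum>A\<in>{A\<in>\<A>. n \<in> A}. \<pi> v A)"

definition optimal_rule ::
  "nat \<Rightarrow> (nat \<Rightarrow> nat) \<Rightarrow> (nat \<Rightarrow> nat \<Rightarrow> real) \<Rightarrow> (nat \<Rightarrow> nat \<Rightarrow> real) \<Rightarrow> nat set set
     \<Rightarrow> ((nat \<Rightarrow> nat) \<Rightarrow> nat set \<Rightarrow> real) \<Rightarrow> bool" where
  "optimal_rule N Kn x p \<A> \<pi> \<longleftrightarrow>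
     alloc_rule N Kn \<A> \<pi> \<and>
     (\<forall>v\<in>profiles N Kn.
        (\<forall>A\<in>\<A>. 0 < \<pi> v A \<longrightarrow>
            (\<forall>B\<in>\<A>. (\<Sum>n\<in>B. wbar Kn x p n (v n)) \<le> (\<Sum>n\<in>A. wbar Kn x p n (v n)))) \<and>
        (\<forall>n\<in>{1..N}. \<forall>i\<in>{1..Kn n}.
            v n < i \<and> wbar Kn x p n (v n) = wbar Kn x p n i \<longrightarrow>
            Qn \<A> \<pi> n v \<le> Qn \<A> \<pi> n (v(n := i))))"

definition welfare ::
  "nat \<Rightarrow> (nat \<Rightarrow> nat) \<Rightarrow> (nat \<Rightarrow> nat \<Rightarrow> real) \<Rightarrow> (nat \<Rightarrow> nat \<Rightarrow> real) \<Rightarrow> nat set set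
     \<Rightarrow> ((nat \<Rightarrow> nat) \<Rightarrow> nat set \<Rightarrow> real) \<Rightarrow> real" where
  "welfare N Kn x p \<A> \<pi> =
     (\<Sum>v\<in>profiles N Kn. prof_prob N p v * (\<Sum>n\<in>{1..N}. Qn \<A> \<pi> n v * x n (v n)))"

definition MSW :: "nat \<Rightarrow> (nat \<Rightarrow> nat) \<Rightarrow> (nat \<Rightarrow> nat \<Rightarrow> real) \<Rightarrow> (nat \<Rightarrow> nat \<Rightarrow> real) \<Rightarrow> real" where
  "MSW N Kn x p = (\<Sum>v\<in>profiles N Kn. prof_prob N p v * (MAX n\<in>{1..N}. x n (v n)))"

definition ELR ::
  "nat \<Rightarrow> (nat \<Rightarrow> nat) \<Rightarrow> (nat \<Rightarrow> nat \<Rightarrow> real) \<Rightarrow> (nat \<Rightarrow> nat \<Rightarrow> real) \<Rightarrow> nat set set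
     \<Rightarrow> ((nat \<Rightarrow> nat) \<Rightarrow> nat set \<Rightarrow> real) \<Rightarrow> real" where
  "ELR N Kn x p \<A> \<pi> = (MSW N Kn x p - welfare N Kn x p \<A> \<pi>) / MSW N Kn x p"

definition eta :: "nat \<Rightarrow> real \<Rightarrow> nat \<Rightarrow> nat set set \<Rightarrow> real" where
  "eta N r K \<A> = Sup {ELR N Kn x p \<A> \<pi> | Kn x p \<pi>.
      valid_dist N r K Kn x p \<and> optimal_rule N Kn x p \<A> \<pi> \<and>
      (\<forall>\<pi>'. optimal_rule N Kn x p \<A> \<pi>' \<longrightarrow> welfare N Kn x p \<A> \<pi>' \<le> welfare N Kn x p \<A> \<pi>)}"

definition single_item :: "nat \<Rightarrow> nat set set" where
  "single_item N = insert {} ((\<lambda>n. {n}) ` {1..N})"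

definition gamma_star :: "real \<Rightarrow> nat \<Rightarrow> real" where
  "gamma_star r K = real (K - 1) * (1 - r powr (- 1 / real (K - 1)))"

end

theory Submission
  imports Defs
begin

definition xx :: "real \<Rightarrow> nat \<Rightarrow> nat \<Rightarrow> real" where
  "xx r K i = r powr (real (i - 1) / real (K - 1))"
definition TT :: "real \<Rightarrow> nat \<Rightarrow> real \<Rightarrow> nat \<Rightarrow> real" where
  "TT r K a i = (if i \<le> K then (1 + a) / (xx r K i + a) else 0)"
definition KnC :: "nat \<Rightarrow> nat \<Rightarrow> nat" where "KnC K n = (if n = 1 then K else 1)"
definition xC :: "real \<Rightarrow> nat \<Rightarrow> nat \<Rightarrow> nat \<Rightarrow> real" where
  "xC r K n i = (if n = 1 then xx r K i else 1)"
definition pC :: "real \<Rightarrow> nat \<Rightarrow> real \<Rightarrow> nat \<Rightarrow> nat \<Rightarrow> real" where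
  "pC r K a n i = (if n = 1 then TT r K a i - TT r K a (Suc i) else 1)"
definition tgt :: "nat \<Rightarrow> nat \<Rightarrow> (nat \<Rightarrow> nat) \<Rightarrow> nat set" where
  "tgt N K v = (if v 1 = K then {1} else if 2 \<le> N then {2} else {})"
definition piC :: "nat \<Rightarrow> nat \<Rightarrow> (nat \<Rightarrow> nat) \<Rightarrow> nat set \<Rightarrow> real" where
  "piC N K v A = (if A = tgt N K v then 1 else 0)"

lemma convex_max_affine:
  "convex_on S (\<lambda>t::real. max (c1 + d1 * t) (c2 + d2 * t))" if "convex S"
  unfolding convex_on_def
proof (intro conjI ballI allI impI)
  show "convex S" by fact
  fix x y u v :: real assume uv: "0 \<le> u" "0 \<le> v" "u + v = 1"
  have e1: "c1 + d1 * (u *\<^sub>R x + v *\<^sub>R y) = u * (c1 + d1 * x) + v * (c1 + d1 * y)"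
    using uv(3) by (simp add: algebra_simps) (metis distrib_left mult.right_neutral)
  have e2: "c2 + d2 * (u *\<^sub>R x + v *\<^sub>R y) = u * (c2 + d2 * x) + v * (c2 + d2 * y)"
    using uv(3) by (simp add: algebra_simps) (metis distrib_left mult.right_neutral)
  have m1: "u * (c1 + d1 * x) \<le> u * max (c1 + d1 * x) (c2 + d2 * x)"
    "u * (c2 + d2 * x) \<le> u * max (c1 + d1 * x) (c2 + d2 * x)"
    "v * (c1 + d1 * y) \<le> v * max (c1 + d1 * y) (c2 + d2 * y)"
    "v * (c2 + d2 * y) \<le> v * max (c1 + d1 * y) (c2 + d2 * y)"
    using uv by (auto intro: mult_left_mono)
  show "max (c1 + d1 * (u *\<^sub>R x + v *\<^sub>R y)) (c2 + d2 * (u *\<^sub>R x + v *\<^sub>R y))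
        \<le> u * max (c1 + d1 * x) (c2 + d2 * x) + v * max (c1 + d1 * y) (c2 + d2 * y)"
    unfolding e1 e2 using m1 by linarith
qed

lemma hbar_eqI:
  assumes "i \<in> {0..Kn n}" "convex_on {0..1} f"
    "\<forall>j\<in>{0..Kn n}. f (gpt Kn p n j) \<le> hpt Kn x p n j"
    "f (gpt Kn p n i) = hpt Kn x p n i"
  shows "hbar Kn x p n i = hpt Kn x p n i"
  unfolding hbar_def
proof (rule cSup_eq_maximum)
  show "hpt Kn x p n i \<in> {f (gpt Kn p n i) |f. convex_on {0..1} f \<and>
           (\<forall>j\<in>{0..Kn n}. f (gpt Kn p n j) \<le> hpt Kn x p n j)}"
    apply (rule CollectI) apply (rule exI[of _ f]) using assms(2-4) by simp
  fix y assume "y \<in> {f (gpt Kn p n i) |f. convex_on {0..1} f \<and>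
           (\<forall>j\<in>{0..Kn n}. f (gpt Kn p n j) \<le> hpt Kn x p n j)}"
  then show "y \<le> hpt Kn x p n i" using assms(1) by auto
qed

locale L =
  fixes r :: real and K :: nat and a :: real
  assumes r: "r > 1" and K: "K \<ge> 2" and a: "a \<ge> 0"
begin

lemma xx_1: "xx r K 1 = 1" using r by (simp add: xx_def)
lemma xx_K: "xx r K K = r" using r K by (simp add: xx_def)
lemma xx_mono: "1 \<le> i \<Longrightarrow> i < j \<Longrightarrow> xx r K i < xx r K j"
  unfolding xx_def using K r
  by (intro powr_less_mono divide_strict_right_mono) (auto simp: of_nat_diff)
lemma xx_ge1: "1 \<le> xx r K i"
  unfolding xx_def using r by (intro ge_one_powr_ge_zero) auto
lemma xx_le_r: "i \<le> K \<Longrightarrow> xx r K i \<le> r"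
proof -
  assume "i \<le> K"
  then have "real (i - 1) / real (K - 1) \<le> 1" using K by (simp add: divide_le_eq_1)
  then have "xx r K i \<le> r powr 1" unfolding xx_def using r by (intro powr_mono) auto
  then show ?thesis using r by simp
qed
lemma xx_ratio: "1 \<le> i \<Longrightarrow> xx r K i / xx r K (Suc i) = r powr (- 1 / real (K - 1))"
proof -
  assume i: "1 \<le> i"
  have "xx r K i / xx r K (Suc i) = r powr (real (i - 1) / real (K - 1) - real (Suc i - 1) / real (K - 1))"
    unfolding xx_def by (simp add: powr_diff)
  also have "real (i - 1) / real (K - 1) - real (Suc i - 1) / real (K - 1) = - 1 / real (K - 1)"
    using i by (simp add: of_nat_diff diff_divide_distrib[symmetric])
  finally show ?thesis .
qed

lemma TT_pos: "i \<le> K \<Longrightarrow> 0 < TT r K a i"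
  using xx_ge1[of i] a by (simp add: TT_def)
lemma TT_1: "TT r K a 1 = 1" using K xx_1 a by (simp add: TT_def)
lemma TT_1': "TT r K a (Suc 0) = 1" using TT_1 by simp
lemma TT_K1: "TT r K a (Suc K) = 0" by (simp add: TT_def)
lemma TT_K: "TT r K a K = (1 + a) / (r + a)" using xx_K by (simp add: TT_def)
lemma TT_dec: "1 \<le> i \<Longrightarrow> i < K \<Longrightarrow> TT r K a (Suc i) < TT r K a i"
  using xx_mono[of i "Suc i"] xx_ge1[of i] a
  by (simp add: TT_def) (intro divide_strict_left_mono mult_pos_pos; linarith?)
lemma TT_ge: "i \<le> K \<Longrightarrow> 1 / xx r K i \<le> TT r K a i"
  using xx_ge1[of i] a mult_left_mono[OF xx_ge1[of i] a] by (simp add: TT_def field_simps)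
lemma TT_xx: "i \<le> K \<Longrightarrow> xx r K i * TT r K a i = (1 + a) - a * TT r K a i"
  using xx_ge1[of i] a by (simp add: TT_def field_simps)


lemma psum: "i \<le> K \<Longrightarrow> (\<Sum>j=1..i. pC r K a 1 j) = 1 - TT r K a (Suc i)"
proof -
  assume "i \<le> K"
  have "(\<Sum>j=1..i. pC r K a 1 j) = - (\<Sum>j=1..i. TT r K a (Suc j) - TT r K a j)"
    by (simp add: pC_def sum_negf[symmetric])
  also have "\<dots> = 1 - TT r K a (Suc i)" by (subst sum_Suc_diff) (auto simp: TT_1')
  finally show ?thesis .
qed

lemma ptail: "i \<le> K \<Longrightarrow> (\<Sum>j\<in>{i<..K}. pC r K a 1 j) = TT r K a (Suc i)"
proof -
  assume i: "i \<le> K"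
  have "{i<..K} = {Suc i..K}" by auto
  then have "(\<Sum>j\<in>{i<..K}. pC r K a 1 j) = - (\<Sum>j=Suc i..K. TT r K a (Suc j) - TT r K a j)"
    by (simp add: pC_def sum_negf[symmetric])
  also have "\<dots> = TT r K a (Suc i)" using i by (subst sum_Suc_diff) (auto simp: TT_K1)
  finally show ?thesis .
qed

lemma gpt1: "j < K \<Longrightarrow> gpt (KnC K) (pC r K a) 1 j = 1 - TT r K a (Suc j)"
  using psum[of j] by (simp add: gpt_def KnC_def)
lemma gpt1K: "gpt (KnC K) (pC r K a) 1 K = 1" by (simp add: gpt_def KnC_def)
lemma hpt1: "j < K \<Longrightarrow> hpt (KnC K) (xC r K) (pC r K a) 1 j = -(1 + a) + a * TT r K a (Suc j)"
  using ptail[of j] TT_xx[of "Suc j"] TT_1 xx_1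
  by (cases "j = 0") (auto simp: hpt_def KnC_def xC_def)
lemma hpt1K: "hpt (KnC K) (xC r K) (pC r K a) 1 K = 0"
  using K by (simp add: hpt_def KnC_def)

lemma f1_pts: "j \<le> K \<Longrightarrow> max (-1 - a * gpt (KnC K) (pC r K a) 1 j) (r * (gpt (KnC K) (pC r K a) 1 j - 1))
     = hpt (KnC K) (xC r K) (pC r K a) 1 j"
proof -
  assume j: "j \<le> K"
  show ?thesis
  proof (cases "j = K")
    case True then show ?thesis using gpt1K hpt1K a by simp
  next
    case False
    then have jK: "j < K" using j by simp
    define T where "T = TT r K a (Suc j)"
    have Tv: "T = (1 + a) / (xx r K (Suc j) + a)" using jK by (simp add: T_def TT_def)
    have "(1 + a) \<le> (r + a) * T"
      using xx_le_r[of "Suc j"] jK xx_ge1[of "Suc j"] a mult_left_mono[OF xx_le_r[of "Suc j"] a]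
      by (simp add: Tv field_simps)
    then have le: "r * ((1 - T) - 1) \<le> -1 - a * (1 - T)" by (simp add: algebra_simps)
    have eG: "gpt (KnC K) (pC r K a) 1 j = 1 - T" using gpt1[OF jK] T_def by simp
    have eH: "hpt (KnC K) (xC r K) (pC r K a) 1 j = -(1 + a) + a * T" using hpt1[OF jK] T_def by simp
    show ?thesis unfolding eG eH using le by (simp add: max_def algebra_simps)
  qed
qed

lemma hbar1: "j \<le> K \<Longrightarrow> hbar (KnC K) (xC r K) (pC r K a) 1 j = hpt (KnC K) (xC r K) (pC r K a) 1 j"
  apply (rule hbar_eqI[where f = "\<lambda>t. max (-1 - a * t) (r * (t - 1))"])
  using f1_pts
  apply (auto simp: KnC_def)
  using convex_max_affine[of "{0..1::real}" "-1" "-a" "-r" r]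
  by (simp add: algebra_simps)

lemma wbar1: "1 \<le> i \<Longrightarrow> i < K \<Longrightarrow> wbar (KnC K) (xC r K) (pC r K a) 1 i = - a"
proof -
  assume i: "1 \<le> i" "i < K"
  have s: "Suc (i - 1) = i" using i by simp
  have d: "TT r K a (Suc i) < TT r K a i" using TT_dec i by simp
  have e1: "hbar (KnC K) (xC r K) (pC r K a) 1 i = -(1 + a) + a * TT r K a (Suc i)"
    using hbar1[of i] hpt1[of i] i by simp
  have e2: "hbar (KnC K) (xC r K) (pC r K a) 1 (i - 1) = -(1 + a) + a * TT r K a i"
    using hbar1[of "i - 1"] hpt1[of "i - 1"] i s by simp
  have e3: "gpt (KnC K) (pC r K a) 1 i = 1 - TT r K a (Suc i)" using gpt1[of i] i by simp
  have e4: "gpt (KnC K) (pC r K a) 1 (i - 1) = 1 - TT r K a i" using gpt1[of "i - 1"] i s by simp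
  show ?thesis unfolding wbar_def e1 e2 e3 e4 using d by (simp add: field_simps)
qed

lemma wbar1K: "wbar (KnC K) (xC r K) (pC r K a) 1 K = r"
proof -
  have s: "Suc (K - 1) = K" using K by simp
  have d: "0 < TT r K a K" using TT_pos by simp
  have e1: "hbar (KnC K) (xC r K) (pC r K a) 1 K = 0"
    using hbar1[of K] hpt1K by simp
  have e2: "hbar (KnC K) (xC r K) (pC r K a) 1 (K - 1) = -(1 + a) + a * TT r K a K"
    using hbar1[of "K - 1"] hpt1[of "K - 1"] K s by simp
  have e3: "gpt (KnC K) (pC r K a) 1 K = 1" using gpt1K by simp
  have e4: "gpt (KnC K) (pC r K a) 1 (K - 1) = 1 - TT r K a K" using gpt1[of "K - 1"] K s by simp
  have "r + a > 0" using r a by simp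
  then have "(1 + a) - a * TT r K a K = r * TT r K a K" unfolding TT_K by (simp add: field_simps)
  then have "((1 + a) - a * TT r K a K) / TT r K a K = r" using d by simp
  then show ?thesis unfolding wbar_def e1 e2 e3 e4 by (simp add: add.commute)
qed

lemma wbarO: "n \<noteq> 1 \<Longrightarrow> wbar (KnC K) (xC r K) (pC r K a) n 1 = 1"
proof -
  assume n: "n \<noteq> 1"
  have g0: "gpt (KnC K) (pC r K a) n 0 = 0" "gpt (KnC K) (pC r K a) n 1 = 1"
    using n by (auto simp: gpt_def KnC_def)
  have h0: "hpt (KnC K) (xC r K) (pC r K a) n 0 = -1" "hpt (KnC K) (xC r K) (pC r K a) n 1 = 0"
    using n by (auto simp: hpt_def KnC_def xC_def)
  have cv: "convex_on {0..1} (\<lambda>t::real. t - 1)"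
    using convex_max_affine[of "{0..1::real}" "-1" 1 "-1" 1] by simp
  have hb: "hbar (KnC K) (xC r K) (pC r K a) n j = hpt (KnC K) (xC r K) (pC r K a) n j" if "j \<le> 1" for j
    apply (rule hbar_eqI[OF _ cv])
    using that n g0 h0 by (auto simp: KnC_def le_Suc_eq)
  show ?thesis unfolding wbar_def using hb[of 0] hb[of 1] g0 h0 by simp
qed

lemma E_aux: "1 \<le> m \<Longrightarrow> m \<le> K \<Longrightarrow>
  1 + real (m - 1) * (1 - r powr (- 1 / real (K - 1)))
   \<le> (\<Sum>i=1..m. pC r K a 1 i * xx r K i) + xx r K m * TT r K a (Suc m)"
proof (induction m rule: nat_induct_at_least)
  case base
  then show ?case using xx_1 TT_1 by (simp add: pC_def algebra_simps)
next
  case (Suc m)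
  let ?q = "r powr (- 1 / real (K - 1))"
  have IH: "1 + real (m - 1) * (1 - ?q) \<le> (\<Sum>i=1..m. pC r K a 1 i * xx r K i) + xx r K m * TT r K a (Suc m)"
    using Suc by simp
  have q: "?q = xx r K m / xx r K (Suc m)" using xx_ratio[of m] Suc by simp
  have pos: "0 < xx r K (Suc m)" using xx_ge1[of "Suc m"] by simp
  have d: "0 \<le> xx r K (Suc m) - xx r K m" using xx_mono[of m "Suc m"] Suc by simp
  have "(xx r K (Suc m) - xx r K m) * (1 / xx r K (Suc m)) \<le> (xx r K (Suc m) - xx r K m) * TT r K a (Suc m)"
    using TT_ge[of "Suc m"] Suc d by (intro mult_left_mono) auto
  moreover have "(xx r K (Suc m) - xx r K m) * (1 / xx r K (Suc m)) = 1 - ?q"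
    using pos q by (simp add: field_simps)
  ultimately have step: "1 - ?q \<le> (xx r K (Suc m) - xx r K m) * TT r K a (Suc m)" by simp
  have sum: "(\<Sum>i=1..Suc m. pC r K a 1 i * xx r K i) = (\<Sum>i=1..m. pC r K a 1 i * xx r K i)
     + (TT r K a (Suc m) - TT r K a (Suc (Suc m))) * xx r K (Suc m)"
    using Suc by (simp add: pC_def)
  have rm: "real (Suc m - 1) = real (m - 1) + 1" using Suc by simp
  show ?case unfolding sum rm using IH step by (simp add: algebra_simps)
qed

lemma E_bound: "1 + real (K - 1) * (1 - r powr (- 1 / real (K - 1))) \<le> (\<Sum>i=1..K. pC r K a 1 i * xx r K i)"
  using E_aux[of K] K TT_K1 by simp

end

lemma single_mem: "A \<in> single_item N \<longleftrightarrow> A = {} \<or> (\<exists>m\<in>{1..N}. A = {m})"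
  unfolding single_item_def by auto

lemma single_finite: "finite (single_item N)"
  unfolding single_item_def by simp

lemma sum_single: "(\<Sum>A\<in>single_item N. f A) = f {} + (\<Sum>n=1..N. f {n})"
proof -
  have "{} \<notin> (\<lambda>n. {n}) ` {1..N}" by auto
  then have "(\<Sum>A\<in>single_item N. f A) = f {} + (\<Sum>A\<in>(\<lambda>n. {n}) ` {1..N}. f A)"
    unfolding single_item_def by (simp add: sum.insert)
  also have "(\<Sum>A\<in>(\<lambda>n. {n}) ` {1..N}. f A) = (\<Sum>n=1..N. f {n})"
    by (subst sum.reindex) (auto simp: inj_on_def)
  finally show ?thesis .
qed

lemma Qn_single: "n \<in> {1..N} \<Longrightarrow> Qn (single_item N) \<pi> n v = \<pi> v {n}"
proof -
  assume n: "n \<in> {1..N}"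
  have "{A \<in> single_item N. n \<in> A} = {{n}}" using n unfolding single_item_def by auto
  then show ?thesis unfolding Qn_def by simp
qed

lemma ELR_le1:
  assumes V: "valid_dist N r K Kn x p" and O: "optimal_rule N Kn x p \<A> \<pi>" and N: "N \<ge> 1"
  shows "ELR N Kn x p \<A> \<pi> \<le> 1"
proof -
  have V1: "\<And>n. n \<in> {1..N} \<Longrightarrow> 1 \<le> Kn n \<and> 0 < x n 1 \<and> (\<forall>i\<in>{1..<Kn n}. x n i < x n (Suc i)) \<and>
        (\<forall>i\<in>{1..Kn n}. 0 < p n i)"
    using V unfolding valid_dist_def by blast
  have xpos: "0 < x n i" if n: "n \<in> {1..N}" and i: "i \<in> {1..Kn n}" for n i
  proof -
    have "\<forall>i. 1 \<le> i \<longrightarrow> i \<le> Kn n \<longrightarrow> 0 < x n i"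
    proof
      fix i show "1 \<le> i \<longrightarrow> i \<le> Kn n \<longrightarrow> 0 < x n i"
      proof (induction i)
        case 0 then show ?case by simp
      next
        case (Suc i)
        show ?case
        proof (cases "i = 0")
          case True then show ?thesis using V1[OF n] by simp
        next
          case False
          then show ?thesis using Suc V1[OF n] by (auto intro: less_trans)
        qed
      qed
    qed
    then show ?thesis using i by auto
  qed
  have prof: "v n \<in> {1..Kn n}" if "v \<in> profiles N Kn" "n \<in> {1..N}" for v n
    using that unfolding profiles_def by (rule PiE_mem)
  have pp: "0 < prof_prob N p v" if "v \<in> profiles N Kn" for v
    unfolding prof_prob_def using V1 prof[OF that] by (intro prod_pos) auto
  have fin: "finite (profiles N Kn)" unfolding profiles_def by (intro finite_PiE) auto
  have ne: "profiles N Kn \<noteq> {}" unfolding profiles_def PiE_eq_empty_iff using V1 by auto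
  have M: "0 < MSW N Kn x p"
    unfolding MSW_def
  proof (rule sum_pos[OF fin ne])
    fix v assume v: "v \<in> profiles N Kn"
    have "x 1 (v 1) \<le> (MAX n\<in>{1..N}. x n (v n))" using N by (intro Max_ge) auto
    moreover have "0 < x 1 (v 1)" using xpos prof[OF v] N by auto
    ultimately show "0 < prof_prob N p v * (MAX n\<in>{1..N}. x n (v n))" using pp[OF v] by simp
  qed
  have W: "0 \<le> welfare N Kn x p \<A> \<pi>"
    unfolding welfare_def
  proof (intro sum_nonneg mult_nonneg_nonneg)
    fix v assume v: "v \<in> profiles N Kn"
    show "0 \<le> prof_prob N p v" using pp[OF v] by simp
    fix n assume n: "n \<in> {1..N}"
    show "0 \<le> x n (v n)" using xpos[OF n prof[OF v n]] by simp
    show "0 \<le> Qn \<A> \<pi> n v" unfolding Qn_def using O v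
      by (intro sum_nonneg) (auto simp: optimal_rule_def alloc_rule_def)
  qed
  show ?thesis unfolding ELR_def using M W by (simp add: pos_divide_le_eq)
qed

lemma final_ineq:
  fixes g M W r :: real
  assumes "0 \<le> g" "1 + g \<le> M" "0 \<le> W" "W \<le> 2 - 1 / r" "r > 1"
  shows "(g - (1 - 1 / r)) / (1 + g) \<le> (M - W) / M"
proof -
  have M: "M > 0" using assms by simp
  have B: "0 \<le> 2 - 1 / r" using assms by (simp add: field_simps)
  have "W / M \<le> (2 - 1 / r) / M" using M assms by (simp add: divide_right_mono)
  also have "\<dots> \<le> (2 - 1 / r) / (1 + g)" using B assms by (intro divide_left_mono) auto
  finally have *: "W / M \<le> (2 - 1 / r) / (1 + g)" .
  have g: "1 + g \<noteq> 0" using assms by simp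
  have hr: "r + g * r > 0" using assms by (simp add: add_pos_nonneg)
  have e1: "(g - (1 - 1 / r)) / (1 + g) = 1 - (2 - 1 / r) / (1 + g)"
    using g hr assms by (simp add: field_simps)
  have e2: "(M - W) / M = 1 - W / M" using M by (simp add: field_simps)
  show ?thesis unfolding e1 e2 using * by simp
qed

definition ccN :: "nat \<Rightarrow> real" where "ccN N = (if 2 \<le> N then 1 else 0)"

definition emb0 :: "nat \<Rightarrow> nat \<Rightarrow> nat \<Rightarrow> nat" where
  "emb0 N i = (\<lambda>n. if n \<in> {1..N} then (if n = 1 then i else 1) else undefined)"

locale L2 = L +
  fixes N :: nat
  assumes N: "N \<ge> 1" and aN: "a = (if N = 1 then 1 else 0)"
begin

lemma prof_mem: "v \<in> profiles N (KnC K) \<Longrightarrow> v 1 \<in> {1..K} \<and> (\<forall>n\<in>{1..N}. n \<noteq> 1 \<longrightarrow> v n = 1)"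
proof -
  assume v: "v \<in> profiles N (KnC K)"
  have 1: "v n \<in> {1..KnC K n}" if "n \<in> {1..N}" for n
    using v that unfolding profiles_def by (rule PiE_mem)
  have "v n = 1" if "n \<in> {1..N}" "n \<noteq> 1" for n
    using 1[OF that(1)] that(2) by (simp add: KnC_def)
  then show ?thesis using 1[of 1] N by (simp add: KnC_def)
qed

lemma prof_prob_eq: "prof_prob N (pC r K a) v = pC r K a 1 (v 1)"
proof -
  have "prof_prob N (pC r K a) v = (\<Prod>n\<in>{1..N}. if n = 1 then pC r K a 1 (v 1) else 1)"
    unfolding prof_prob_def by (intro prod.cong) (auto simp: pC_def)
  also have "\<dots> = pC r K a 1 (v 1)" using N by (subst prod.delta) auto
  finally show ?thesis .
qed


lemma emb_bij: "bij_betw (emb0 N) {1..K} (profiles N (KnC K))"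
proof (rule bij_betw_byWitness[where f' = "\<lambda>v. v 1"])
  show "\<forall>i\<in>{1..K}. emb0 N i 1 = i" using N by (simp add: emb0_def)
  show "\<forall>v\<in>profiles N (KnC K). emb0 N (v 1) = v"
  proof
    fix v assume v: "v \<in> profiles N (KnC K)"
    show "emb0 N (v 1) = v"
    proof (rule ext)
      fix n show "emb0 N (v 1) n = v n"
      proof (cases "n \<in> {1..N}")
        case True
        have "n \<noteq> 1 \<Longrightarrow> v n = 1" using prof_mem[OF v] True by blast
        then show ?thesis using True by (simp add: emb0_def)
      next
        case False
        have vn: "v n = undefined" using v False unfolding profiles_def by (rule PiE_arb)
        have e: "emb0 N (v 1) n = undefined" using False unfolding emb0_def by (intro if_not_P) 
        show ?thesis unfolding e vn ..
      qed
    qed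
  qed
  show "(emb0 N) ` {1..K} \<subseteq> profiles N (KnC K)"
  proof
    fix w assume "w \<in> (emb0 N) ` {1..K}"
    then obtain i where i: "i \<in> {1..K}" "w = emb0 N i" by blast
    show "w \<in> profiles N (KnC K)" unfolding profiles_def i(2)
    proof (rule PiE_I)
      fix n assume "n \<in> {1..N}" then show "emb0 N i n \<in> {1..KnC K n}"
        using i(1) by (simp add: emb0_def KnC_def)
    next
      fix n assume "n \<notin> {1..N}" then show "emb0 N i n = undefined"
        unfolding emb0_def by (intro if_not_P)
    qed
  qed
  show "(\<lambda>v. v 1) ` profiles N (KnC K) \<subseteq> {1..K}"
  proof
    fix i assume "i \<in> (\<lambda>v. v 1) ` profiles N (KnC K)"
    then obtain v where "v \<in> profiles N (KnC K)" "i = v 1" by blast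
    then show "i \<in> {1..K}" using prof_mem[of v] by simp
  qed
qed
lemma reindex: "(\<Sum>v\<in>profiles N (KnC K). pC r K a 1 (v 1) * f (v 1)) = (\<Sum>i=1..K. pC r K a 1 i * f i)"
proof -
  have "(\<Sum>i=1..K. pC r K a 1 (emb0 N i 1) * f (emb0 N i 1)) = (\<Sum>v\<in>profiles N (KnC K). pC r K a 1 (v 1) * f (v 1))"
    by (rule sum.reindex_bij_betw[OF emb_bij])
  moreover have "(\<Sum>i=1..K. pC r K a 1 (emb0 N i 1) * f (emb0 N i 1)) = (\<Sum>i=1..K. pC r K a 1 i * f i)"
    using N by (intro sum.cong) (auto simp: emb0_def)
  ultimately show ?thesis by simp
qed



lemma a_cases: "(N = 1 \<and> a = 1) \<or> (2 \<le> N \<and> a = 0)" using N aN by auto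

lemma pC_pos: "i \<in> {1..K} \<Longrightarrow> 0 < pC r K a 1 i"
proof -
  assume i: "i \<in> {1..K}"
  show ?thesis
  proof (cases "i = K")
    case True then show ?thesis using TT_pos[of K] TT_K1 by (simp add: pC_def)
  next
    case False then show ?thesis using TT_dec[of i] i by (simp add: pC_def)
  qed
qed

lemma x_at: "v \<in> profiles N (KnC K) \<Longrightarrow> n \<in> {1..N} \<Longrightarrow> xC r K n (v n) = (if n = 1 then xx r K (v 1) else 1)"
  by (simp add: xC_def)

lemma wbar_at: "v \<in> profiles N (KnC K) \<Longrightarrow> n \<in> {1..N} \<Longrightarrow>
   wbar (KnC K) (xC r K) (pC r K a) n (v n) = (if n = 1 then (if v 1 = K then r else -a) else 1)"
proof -
  assume v: "v \<in> profiles N (KnC K)" and n: "n \<in> {1..N}"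
  note pm = prof_mem[OF v]
  show ?thesis
  proof (cases "n = 1")
    case True
    then show ?thesis using pm wbar1[of "v 1"] wbar1K by auto
  next
    case False
    then have "v n = 1" using pm n by blast
    then show ?thesis using False wbarO[of n] by simp
  qed
qed

lemma tgt_mem: "tgt N K v \<in> single_item N"
  using N unfolding tgt_def single_item_def by auto

lemma prof_prob_nn: "v \<in> profiles N (KnC K) \<Longrightarrow> 0 \<le> prof_prob N (pC r K a) v"
  using pC_pos prof_mem prof_prob_eq by (metis less_imp_le)

lemma support:
  assumes v: "v \<in> profiles N (KnC K)" and B: "B \<in> single_item N"
  shows "(\<Sum>n\<in>B. wbar (KnC K) (xC r K) (pC r K a) n (v n))
        \<le> (\<Sum>n\<in>tgt N K v. wbar (KnC K) (xC r K) (pC r K a) n (v n))"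
proof -
  have w1: "wbar (KnC K) (xC r K) (pC r K a) 1 (v 1) = (if v 1 = K then r else -a)"
    using wbar_at[OF v, of 1] N by simp
  have tv: "(\<Sum>n\<in>tgt N K v. wbar (KnC K) (xC r K) (pC r K a) n (v n))
      = (if v 1 = K then r else if 2 \<le> N then 1 else 0)"
    using w1 wbar_at[OF v, of 2] wbar1K by (simp add: tgt_def)
  have bnd: "wbar (KnC K) (xC r K) (pC r K a) m (v m) \<le> (if v 1 = K then r else if 2 \<le> N then 1 else 0)"
    if m: "m \<in> {1..N}" for m
  proof (cases "m = 1")
    case True then show ?thesis using w1 a_cases r a by auto
  next
    case False then show ?thesis using wbar_at[OF v m] m r by auto
  qed
  show ?thesis unfolding tv using B bnd r unfolding single_mem by auto
qed

lemma optimal_pi: "optimal_rule N (KnC K) (xC r K) (pC r K a) (single_item N) (piC N K)"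
  unfolding optimal_rule_def alloc_rule_def
proof (intro conjI ballI allI impI)
  fix v assume v: "v \<in> profiles N (KnC K)"
  fix A
  show "0 \<le> piC N K v A" by (simp add: piC_def)
  show "A \<notin> single_item N \<Longrightarrow> piC N K v A = 0" using tgt_mem by (auto simp: piC_def)
next
  fix v assume v: "v \<in> profiles N (KnC K)"
  show "(\<Sum>A\<in>single_item N. piC N K v A) = 1"
    unfolding piC_def using tgt_mem single_finite by (simp add: sum.delta)
next
  fix v A B assume v: "v \<in> profiles N (KnC K)" and A: "A \<in> single_item N" and B: "B \<in> single_item N"
    and pos: "0 < piC N K v A"
  then have "A = tgt N K v" by (auto simp: piC_def split: if_splits)
  then show "(\<Sum>n\<in>B. wbar (KnC K) (xC r K) (pC r K a) n (v n))
        \<le> (\<Sum>n\<in>A. wbar (KnC K) (xC r K) (pC r K a) n (v n))" using support[OF v B] by simp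
next
  fix v n i assume v: "v \<in> profiles N (KnC K)" and n: "n \<in> {1..N}" and i: "i \<in> {1..KnC K n}"
    and h: "v n < i \<and> wbar (KnC K) (xC r K) (pC r K a) n (v n) = wbar (KnC K) (xC r K) (pC r K a) n i"
  note pm = prof_mem[OF v]
  have n1: "n = 1"
  proof (rule ccontr)
    assume "n \<noteq> 1"
    then have "v n = 1" "i = 1" using pm n i by (auto simp: KnC_def)
    then show False using h by simp
  qed
  then have "v 1 \<noteq> K" using h i by (auto simp: KnC_def)
  then have "tgt N K v \<noteq> {1}" by (auto simp: tgt_def)
  then have "Qn (single_item N) (piC N K) n v = 0"
    using Qn_single[OF n] n1 by (simp add: piC_def)
  moreover have "0 \<le> Qn (single_item N) (piC N K) n (v(n := i))"
    unfolding Qn_def by (intro sum_nonneg) (simp add: piC_def)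
  ultimately show "Qn (single_item N) (piC N K) n v \<le> Qn (single_item N) (piC N K) n (v(n := i))" by simp
qed


lemma welfare_term:
  assumes v: "v \<in> profiles N (KnC K)"
  shows "(\<Sum>n\<in>{1..N}. Qn (single_item N) (piC N K) n v * xC r K n (v n)) = (if v 1 = K then r else ccN N)"
proof -
  have "(\<Sum>n\<in>{1..N}. Qn (single_item N) (piC N K) n v * xC r K n (v n))
      = (\<Sum>n\<in>{1..N}. (if {n} = tgt N K v then xC r K n (v n) else 0))"
    by (intro sum.cong) (auto simp: Qn_single piC_def)
  also have "\<dots> = (if v 1 = K then r else ccN N)"
  proof (cases "v 1 = K")
    case True
    then have "(\<Sum>n\<in>{1..N}. (if {n} = tgt N K v then xC r K n (v n) else 0))
        = (\<Sum>n\<in>{1..N}. (if n = 1 then xC r K n (v n) else 0))"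
      by (intro sum.cong) (auto simp: tgt_def)
    also have "\<dots> = r" using N True xx_K by (simp add: xC_def)
    finally show ?thesis using True by simp
  next
    case False
    show ?thesis
    proof (cases "2 \<le> N")
      case True
      have "(\<Sum>n\<in>{1..N}. (if {n} = tgt N K v then xC r K n (v n) else 0))
          = (\<Sum>n\<in>{1..N}. (if n = 2 then xC r K n (v n) else 0))"
        using False True by (intro sum.cong) (auto simp: tgt_def)
      also have "\<dots> = 1" using True by (simp add: xC_def)
      finally show ?thesis using True False by (simp add: ccN_def)
    next
      case False2: False
      have "(\<Sum>n\<in>{1..N}. (if {n} = tgt N K v then xC r K n (v n) else 0)) = 0"
        using False False2 by (intro sum.neutral) (auto simp: tgt_def)
      then show ?thesis using False False2 by (simp add: ccN_def)
    qed
  qed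
  finally show ?thesis .
qed

lemma welfare_pi: "welfare N (KnC K) (xC r K) (pC r K a) (single_item N) (piC N K)
   = (\<Sum>i=1..K. pC r K a 1 i * (if i = K then r else ccN N))"
proof -
  have "welfare N (KnC K) (xC r K) (pC r K a) (single_item N) (piC N K)
     = (\<Sum>v\<in>profiles N (KnC K). pC r K a 1 (v 1) * (\<lambda>i. if i = K then r else ccN N) (v 1))"
    unfolding welfare_def
  proof (intro sum.cong refl)
    fix v assume v: "v \<in> profiles N (KnC K)"
    show "prof_prob N (pC r K a) v * (\<Sum>n\<in>{1..N}. Qn (single_item N) (piC N K) n v * xC r K n (v n)) =
      pC r K a 1 (v 1) * (\<lambda>i. if i = K then r else ccN N) (v 1)"
      unfolding welfare_term[OF v] prof_prob_eq by simp
  qed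
  also have "\<dots> = (\<Sum>i=1..K. pC r K a 1 i * (if i = K then r else ccN N))" by (rule reindex)
  finally show ?thesis .
qed

lemma welfare_bound: "(\<Sum>i=1..K. pC r K a 1 i * (if i = K then r else ccN N)) \<le> 2 - 1 / r"
proof -
  have "(\<Sum>i=1..K. pC r K a 1 i * (if i = K then r else ccN N))
      = (\<Sum>i=1..K. ccN N * pC r K a 1 i + (if i = K then (r - ccN N) * pC r K a 1 i else 0))"
    by (intro sum.cong) (auto simp: algebra_simps)
  also have "\<dots> = ccN N * (\<Sum>i=1..K. pC r K a 1 i) + (r - ccN N) * pC r K a 1 K"
    using K by (simp add: sum.distrib sum_distrib_left)
  also have "\<dots> = ccN N + (r - ccN N) * ((1 + a) / (r + a))"
    using psum[of K] TT_K1 TT_K by (simp add: pC_def)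
  also have "\<dots> \<le> 2 - 1 / r"
    using a_cases
  proof
    assume "N = 1 \<and> a = 1"
    then have "ccN N = 0" "a = 1" by (auto simp: ccN_def)
    then show ?thesis using r by (simp add: field_simps)
  next
    assume "2 \<le> N \<and> a = 0"
    then have "ccN N = 1" "a = 0" by (auto simp: ccN_def)
    then show ?thesis using r by (simp add: field_simps)
  qed
  finally show ?thesis .
qed

lemma welfare_max:
  assumes O: "optimal_rule N (KnC K) (xC r K) (pC r K a) (single_item N) \<pi>"
  shows "welfare N (KnC K) (xC r K) (pC r K a) (single_item N) \<pi>
      \<le> welfare N (KnC K) (xC r K) (pC r K a) (single_item N) (piC N K)"
  unfolding welfare_def
proof (rule sum_mono)
  fix v assume v: "v \<in> profiles N (KnC K)"
  note pm = prof_mem[OF v]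
  have nn: "\<And>A. 0 \<le> \<pi> v A" and s1: "(\<Sum>A\<in>single_item N. \<pi> v A) = 1"
    and supp: "\<And>A B. A \<in> single_item N \<Longrightarrow> B \<in> single_item N \<Longrightarrow> 0 < \<pi> v A \<Longrightarrow>
       (\<Sum>n\<in>B. wbar (KnC K) (xC r K) (pC r K a) n (v n)) \<le> (\<Sum>n\<in>A. wbar (KnC K) (xC r K) (pC r K a) n (v n))"
    using O v unfolding optimal_rule_def alloc_rule_def by blast+
  have tot: "(\<Sum>n=1..N. \<pi> v {n}) \<le> 1" using s1 nn[of "{}"] by (simp add: sum_single)
  have eq: "(\<Sum>n\<in>{1..N}. Qn (single_item N) \<pi> n v * xC r K n (v n)) = (\<Sum>n\<in>{1..N}. \<pi> v {n} * xC r K n (v n))"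
    by (intro sum.cong) (auto simp: Qn_single)
  have rhs: "(\<Sum>n\<in>{1..N}. Qn (single_item N) (piC N K) n v * xC r K n (v n)) = (if v 1 = K then r else ccN N)"
    by (rule welfare_term[OF v])
  have "(\<Sum>n\<in>{1..N}. Qn (single_item N) \<pi> n v * xC r K n (v n))
      \<le> (\<Sum>n\<in>{1..N}. Qn (single_item N) (piC N K) n v * xC r K n (v n))"
    unfolding eq rhs
  proof (cases "v 1 = K")
    case True
    have "(\<Sum>n\<in>{1..N}. \<pi> v {n} * xC r K n (v n)) \<le> (\<Sum>n\<in>{1..N}. r * \<pi> v {n})"
    proof (intro sum_mono)
      fix n assume n: "n \<in> {1..N}"
      have "xC r K n (v n) \<le> r" using x_at[OF v n] xx_le_r pm r by auto
      then have "xC r K n (v n) * \<pi> v {n} \<le> r * \<pi> v {n}" by (rule mult_right_mono[OF _ nn])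
      then show "\<pi> v {n} * xC r K n (v n) \<le> r * \<pi> v {n}" by (simp add: mult.commute)
    qed
    also have "\<dots> \<le> r" using tot r by (simp add: sum_distrib_left[symmetric])
    finally show "(\<Sum>n\<in>{1..N}. \<pi> v {n} * xC r K n (v n)) \<le> (if v 1 = K then r else ccN N)" using True by simp
  next
    case False
    have z: "\<pi> v {1} = 0"
    proof (rule ccontr)
      assume "\<pi> v {1} \<noteq> 0"
      then have p: "0 < \<pi> v {1}" using nn[of "{1}"] by simp
      have A: "{1} \<in> single_item N" using N single_mem by auto
      have B: "tgt N K v \<in> single_item N" by (rule tgt_mem)
      have "(\<Sum>n\<in>tgt N K v. wbar (KnC K) (xC r K) (pC r K a) n (v n)) \<le> wbar (KnC K) (xC r K) (pC r K a) 1 (v 1)"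
        using supp[OF A B p] by simp
      moreover have "wbar (KnC K) (xC r K) (pC r K a) 1 (v 1) = -a" using wbar_at[OF v, of 1] N False by simp
      moreover have "(\<Sum>n\<in>tgt N K v. wbar (KnC K) (xC r K) (pC r K a) n (v n)) = (if 2 \<le> N then 1 else 0)"
        using False wbar_at[OF v, of 2] by (simp add: tgt_def)
      ultimately show False using a_cases by auto
    qed
    have "(\<Sum>n\<in>{1..N}. \<pi> v {n} * xC r K n (v n)) \<le> (\<Sum>n\<in>{1..N}. ccN N * \<pi> v {n})"
    proof (intro sum_mono)
      fix n assume n: "n \<in> {1..N}"
      show "\<pi> v {n} * xC r K n (v n) \<le> ccN N * \<pi> v {n}"
      proof (cases "n = 1")
        case True then show ?thesis using z by simp
      next
        case False
        then have "2 \<le> N" using n by auto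
        then show ?thesis using False by (simp add: xC_def ccN_def)
      qed
    qed
    also have "\<dots> \<le> ccN N" using tot by (simp add: sum_distrib_left[symmetric] ccN_def)
    finally show "(\<Sum>n\<in>{1..N}. \<pi> v {n} * xC r K n (v n)) \<le> (if v 1 = K then r else ccN N)" using False by simp
  qed
  then show "prof_prob N (pC r K a) v * (\<Sum>n\<in>{1..N}. Qn (single_item N) \<pi> n v * xC r K n (v n))
      \<le> prof_prob N (pC r K a) v * (\<Sum>n\<in>{1..N}. Qn (single_item N) (piC N K) n v * xC r K n (v n))"
    by (rule mult_left_mono[OF _ prof_prob_nn[OF v]])
qed

lemma MSW_eq: "MSW N (KnC K) (xC r K) (pC r K a) = (\<Sum>i=1..K. pC r K a 1 i * xx r K i)"
proof -
  have "MSW N (KnC K) (xC r K) (pC r K a) = (\<Sum>v\<in>profiles N (KnC K). pC r K a 1 (v 1) * xx r K (v 1))"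
    unfolding MSW_def
  proof (intro sum.cong refl)
    fix v assume v: "v \<in> profiles N (KnC K)"
    have "(MAX n\<in>{1..N}. xC r K n (v n)) = xx r K (v 1)"
    proof (rule Max_eqI)
      show "finite ((\<lambda>n. xC r K n (v n)) ` {1..N})" by simp
      show "xx r K (v 1) \<in> (\<lambda>n. xC r K n (v n)) ` {1..N}" using N by (force simp: xC_def)
      fix y assume "y \<in> (\<lambda>n. xC r K n (v n)) ` {1..N}"
      then show "y \<le> xx r K (v 1)" using xx_ge1 by (auto simp: xC_def)
    qed
    then show "prof_prob N (pC r K a) v * (MAX n\<in>{1..N}. xC r K n (v n)) = pC r K a 1 (v 1) * xx r K (v 1)"
      by (simp add: prof_prob_eq)
  qed
  also have "\<dots> = (\<Sum>i=1..K. pC r K a 1 i * xx r K i)" by (rule reindex)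
  finally show ?thesis .
qed

lemma valid: "valid_dist N r K (KnC K) (xC r K) (pC r K a)"
  unfolding valid_dist_def
proof (intro conjI ballI)
  fix n assume n: "n \<in> {1..N}"
  show "1 \<le> KnC K n" "KnC K n \<le> K" using K by (auto simp: KnC_def)
  show "0 < xC r K n 1" using xx_1 by (simp add: xC_def)
  show "xC r K n i < xC r K n (Suc i)" if "i \<in> {1..<KnC K n}" for i
    using that xx_mono[of i "Suc i"] by (auto simp: xC_def KnC_def split: if_splits)
  show "0 < pC r K a n i" if "i \<in> {1..KnC K n}" for i
    using that pC_pos[of i] by (auto simp: pC_def KnC_def split: if_splits)
  show "(\<Sum>i=1..KnC K n. pC r K a n i) = 1"
    using psum[of K] TT_K1 by (auto simp: KnC_def pC_def)
next
  have mx: "(MAX n\<in>{1..N}. xC r K n (KnC K n)) = r"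
  proof (rule Max_eqI)
    show "finite ((\<lambda>n. xC r K n (KnC K n)) ` {1..N})" by simp
    show "r \<in> (\<lambda>n. xC r K n (KnC K n)) ` {1..N}" using N xx_K by (force simp: xC_def KnC_def)
    fix y assume "y \<in> (\<lambda>n. xC r K n (KnC K n)) ` {1..N}"
    then show "y \<le> r" using xx_K r by (auto simp: xC_def KnC_def)
  qed
  have mn: "(MIN n\<in>{1..N}. xC r K n 1) = 1"
  proof (rule Min_eqI)
    show "finite ((\<lambda>n. xC r K n 1) ` {1..N})" by simp
    show "1 \<in> (\<lambda>n. xC r K n 1) ` {1..N}" using N xx_1 by (force simp: xC_def)
    fix y assume "y \<in> (\<lambda>n. xC r K n 1) ` {1..N}"
    then show "1 \<le> y" using xx_1 by (auto simp: xC_def)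
  qed
  show "(MAX n\<in>{1..N}. xC r K n (KnC K n)) / (MIN n\<in>{1..N}. xC r K n 1) \<le> r"
    unfolding mx mn by simp
qed

end

theorem proposition9:
  fixes r :: real and N K :: nat
  assumes "r > 1" and "N \<ge> 1" and "K \<ge> 2"
  shows "eta N r K (single_item N) \<ge>
           (gamma_star r K - (1 - 1 / r)) / (1 + gamma_star r K)"
proof -
  define a :: real where "a = (if N = 1 then 1 else 0)"
  interpret L2 r K a N using assms by unfold_locales (auto simp: a_def)
  define S where "S = {ELR N Kn x p (single_item N) \<pi> | Kn x p \<pi>.
      valid_dist N r K Kn x p \<and> optimal_rule N Kn x p (single_item N) \<pi> \<and>
      (\<forall>\<pi>'. optimal_rule N Kn x p (single_item N) \<pi>' \<longrightarrow>
         welfare N Kn x p (single_item N) \<pi>' \<le> welfare N Kn x p (single_item N) \<pi>)}"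
  have mem: "ELR N (KnC K) (xC r K) (pC r K a) (single_item N) (piC N K) \<in> S"
    unfolding S_def using valid optimal_pi welfare_max by blast
  have bdd: "bdd_above S"
  proof (rule bdd_aboveI)
    fix y assume "y \<in> S"
    then show "y \<le> 1" unfolding S_def using ELR_le1 assms(2) by blast
  qed
  define g where "g = gamma_star r K"
  define M where "M = MSW N (KnC K) (xC r K) (pC r K a)"
  define W where "W = welfare N (KnC K) (xC r K) (pC r K a) (single_item N) (piC N K)"
  have q: "r powr (- 1 / real (K - 1)) \<le> r powr 0"
    using assms by (intro powr_mono) auto
  have g0: "0 \<le> g" unfolding g_def gamma_star_def using q assms by simp
  have gM: "1 + g \<le> M" unfolding g_def M_def gamma_star_def MSW_eq using E_bound by simp
  have W0: "0 \<le> W" unfolding W_def welfare_pi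
    using pC_pos assms by (intro sum_nonneg mult_nonneg_nonneg) (auto simp: less_imp_le ccN_def)
  have WB: "W \<le> 2 - 1 / r" unfolding W_def welfare_pi by (rule welfare_bound)
  have "(g - (1 - 1 / r)) / (1 + g) \<le> (M - W) / M"
    by (rule final_ineq[OF g0 gM W0 WB assms(1)])
  also have "\<dots> = ELR N (KnC K) (xC r K) (pC r K a) (single_item N) (piC N K)"
    unfolding ELR_def M_def W_def ..
  also have "\<dots> \<le> Sup S" by (rule cSup_upper[OF mem bdd])
  finally show ?thesis unfolding eta_def S_def g_def .
qed

end
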